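(* Let $X$ be a $T_1$ topological space. The following are equivalent: (i) $X$ is an $F_cP$-space, i.e. $C_c(X)_F$ is von Neumann regular; (ii) for every $Z\in Z[C_c(X)_F]$ there exists a finite $F\subseteq X$ such that $Z\setminus F$ is clopen in the subspace $X\setminus F$; (iii) $C_c(X)_F$ is a PP-ring, i.e. the annihilator of every element is generated by an idempotent.
   Context: $C_c(X)_F$ denotes the set of all functions $f:X\to\mathbb{R}$ whose range is countable and whose set of points of discontinuity is finite; it is a commutative ring with unity under pointwise operations. $Z(f)=\{x:f(x)=0\}$, $Z[C_c(X)_F]=\{Z(f):f\in C_c(X)_F\}$. A commutative ring $R$ is von Neumann regular if for every $a\in R$ there is $r\in R$ with $a=a^2r$. $\mathrm{Ann}(f)=\{g: gf=0\}$. *)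

theory Defs
  imports "HOL-Analysis.Analysis"
begin

text \<open>The ring C_c(X)_F: real functions on X with countable range and finitely many
  points of discontinuity. The space X is the whole (T1) type 'a.\<close>
definition CcF :: "('a::topological_space \<Rightarrow> real) set" where
  "CcF = {f. countable (range f) \<and> finite {x. \<not> (f \<longlongrightarrow> f x) (at x)}}"

definition zset :: "('a \<Rightarrow> real) \<Rightarrow> 'a set" where
  "zset f = {x. f x = 0}"

definition ZCcF :: "'a::topological_space set set" where
  "ZCcF = zset ` CcF"

definition AnnCcF :: "('a::topological_space \<Rightarrow> real) \<Rightarrow> ('a \<Rightarrow> real) set" where
  "AnnCcF f = {g \<in> CcF. (\<lambda>x. g x * f x) = (\<lambda>x. 0)}"

definition CcF_von_neumann_regular :: "'a::topological_space itself \<Rightarrow> bool" where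
  "CcF_von_neumann_regular _ \<longleftrightarrow>
     (\<forall>a \<in> (CcF :: ('a \<Rightarrow> real) set). \<exists>r \<in> CcF. a = (\<lambda>x. a x * a x * r x))"

definition CcF_PP_ring :: "'a::topological_space itself \<Rightarrow> bool" where
  "CcF_PP_ring _ \<longleftrightarrow>
     (\<forall>f \<in> (CcF :: ('a \<Rightarrow> real) set). \<exists>e \<in> CcF. (\<lambda>x. e x * e x) = e \<and>
         AnnCcF f = {(\<lambda>x. e x * h x) | h. h \<in> CcF})"

end

theory Submission
  imports Defs
begin

lemma open_from_ev:
  assumes "\<forall>x\<in>S. eventually (\<lambda>y. y \<in> S) (nhds x)"
  shows "open S"
  unfolding open_subopen[of S]
proof
  fix x assume "x \<in> S"
  then obtain T where "open T" "x \<in> T" "\<forall>y\<in>T. y \<in> S"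
    using assms unfolding eventually_nhds by blast
  then show "\<exists>T. open T \<and> x \<in> T \<and> T \<subseteq> S" by blast
qed

lemma CcF_mult:
  assumes "f \<in> CcF" "g \<in> CcF"
  shows "(\<lambda>x. f x * g x) \<in> CcF"
proof -
  have c1: "countable (range f)" "countable (range g)"
    using assms unfolding CcF_def by auto
  have "range (\<lambda>x. f x * g x) \<subseteq> (\<lambda>p. fst p * snd p) ` (range f \<times> range g)"
    by force
  moreover have "countable ((\<lambda>p. fst p * snd p) ` (range f \<times> range g))"
    by (rule countable_image, rule countable_SIGMA) (use c1 in auto)
  ultimately have "countable (range (\<lambda>x. f x * g x))" using countable_subset by blast
  moreover have "{x. \<not> ((\<lambda>x. f x * g x) \<longlongrightarrow> f x * g x) (at x)}
      \<subseteq> {x. \<not> (f \<longlongrightarrow> f x) (at x)} \<union> {x. \<not> (g \<longlongrightarrow> g x) (at x)}"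
    using tendsto_mult by blast
  moreover have "finite ({x. \<not> (f \<longlongrightarrow> f x) (at x)} \<union> {x. \<not> (g \<longlongrightarrow> g x) (at x)})"
    using assms unfolding CcF_def by auto
  ultimately show ?thesis unfolding CcF_def using finite_subset by auto
qed

lemma CcF_one_minus:
  assumes "f \<in> CcF"
  shows "(\<lambda>x. 1 - f x) \<in> CcF"
proof -
  have "range (\<lambda>x. 1 - f x) \<subseteq> (\<lambda>v. 1 - v) ` range f" by auto
  moreover have "countable ((\<lambda>v. 1 - v) ` range f)"
    using assms unfolding CcF_def by auto
  ultimately have "countable (range (\<lambda>x. 1 - f x))" using countable_subset by blast
  moreover have "{x. \<not> ((\<lambda>x. 1 - f x) \<longlongrightarrow> 1 - f x) (at x)}
      \<subseteq> {x. \<not> (f \<longlongrightarrow> f x) (at x)}"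
    using tendsto_diff[OF tendsto_const] by blast
  ultimately show ?thesis using assms unfolding CcF_def using finite_subset by auto
qed

lemma CcF_const: "(\<lambda>x. c) \<in> CcF"
  unfolding CcF_def by auto

lemma CcF_delta:
  "(\<lambda>y. if y = (a::'a::t1_space) then 1 else 0 :: real) \<in> CcF"
proof -
  define d where "d = (\<lambda>y. if y = a then 1 else 0 :: real)"
  have "range d \<subseteq> {0,1}" unfolding d_def by auto
  moreover have "countable {0::real,1}" by simp
  ultimately have c: "countable (range d)" by (rule countable_subset)
  have s: "{x. \<not> (d \<longlongrightarrow> d x) (at x)} \<subseteq> {a}"
  proof
    fix x assume x: "x \<in> {x. \<not> (d \<longlongrightarrow> d x) (at x)}"
    show "x \<in> {a}"
    proof (rule ccontr)
      assume xa: "x \<notin> {a}"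
      have "eventually (\<lambda>y. y \<noteq> a) (at x)" by (rule eventually_neq_at_within)
      hence "eventually (\<lambda>y. d y = d x) (at x)"
        by (rule eventually_mono) (use xa in \<open>simp add: d_def\<close>)
      hence "(d \<longlongrightarrow> d x) (at x)"
        by (rule tendsto_eventually)
      with x show False by simp
    qed
  qed
  have "finite {x. \<not> (d \<longlongrightarrow> d x) (at x)}"
    by (rule finite_subset[OF s]) simp
  with c have "d \<in> CcF" unfolding CcF_def by simp
  thus ?thesis unfolding d_def .
qed

lemma cont01:
  fixes g :: "'a::topological_space \<Rightarrow> real"
  assumes "(g \<longlongrightarrow> g x) (at x)" "\<forall>y. g y = 0 \<or> g y = 1"
  shows "eventually (\<lambda>y. g y = g x) (nhds x)"
proof -
  have "eventually (\<lambda>y. dist (g y) (g x) < 1) (at x)"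
    using assms(1) by (rule tendstoD) simp
  hence "eventually (\<lambda>y. g y = g x) (at x)"
  proof (rule eventually_mono)
    fix y assume "dist (g y) (g x) < 1"
    thus "g y = g x" using assms(2)[rule_format, of y] assms(2)[rule_format, of x]
      by (auto simp: dist_real_def)
  qed
  hence "eventually (\<lambda>y. y \<noteq> x \<longrightarrow> y \<in> UNIV \<longrightarrow> g y = g x) (nhds x)"
    unfolding eventually_at_filter .
  thus ?thesis by (rule eventually_mono) auto
qed

lemma inv_CcF:
  assumes f: "f \<in> CcF" and F: "finite F"
    and ev: "\<forall>x. f x = 0 \<longrightarrow> x \<notin> F \<longrightarrow> eventually (\<lambda>y. f y = 0) (nhds x)"
  shows "(\<lambda>x. if f x = 0 then 0 else 1 / f x) \<in> CcF"
proof -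
  define r where "r = (\<lambda>x. if f x = 0 then 0 else 1 / f x)"
  have "range r \<subseteq> insert 0 ((\<lambda>v. 1 / v) ` range f)" unfolding r_def by auto
  moreover have "countable (insert 0 ((\<lambda>v. 1 / v) ` range f))"
    using f unfolding CcF_def by auto
  ultimately have cr: "countable (range r)" by (rule countable_subset)
  have "{x. \<not> (r \<longlongrightarrow> r x) (at x)} \<subseteq> F \<union> {x. \<not> (f \<longlongrightarrow> f x) (at x)}"
  proof
    fix x assume x: "x \<in> {x. \<not> (r \<longlongrightarrow> r x) (at x)}"
    show "x \<in> F \<union> {x. \<not> (f \<longlongrightarrow> f x) (at x)}"
    proof (rule ccontr)
      assume nx: "x \<notin> F \<union> {x. \<not> (f \<longlongrightarrow> f x) (at x)}"
      hence fc: "(f \<longlongrightarrow> f x) (at x)" and xF: "x \<notin> F" by auto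
      have "(r \<longlongrightarrow> r x) (at x)"
      proof (cases "f x = 0")
        case True
        hence "eventually (\<lambda>y. f y = 0) (nhds x)" using ev xF by auto
        hence "eventually (\<lambda>y. y \<noteq> x \<longrightarrow> y \<in> UNIV \<longrightarrow> f y = 0) (nhds x)"
          by (rule eventually_mono) auto
        hence "eventually (\<lambda>y. f y = 0) (at x)"
          unfolding eventually_at_filter .
        hence "eventually (\<lambda>y. r y = r x) (at x)"
          by (rule eventually_mono) (simp add: r_def True)
        thus ?thesis by (rule tendsto_eventually)
      next
        case False
        have "eventually (\<lambda>y. f y \<noteq> 0) (at x)"
          using tendsto_imp_eventually_ne[OF fc False] .
        hence e1: "eventually (\<lambda>y. 1 / f y = r y) (at x)"
          by (rule eventually_mono) (simp add: r_def)
        have l1: "((\<lambda>y. 1 / f y) \<longlongrightarrow> 1 / f x) (at x)"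
          using tendsto_divide[OF tendsto_const fc False] .
        have "(r \<longlongrightarrow> 1 / f x) (at x)" using tendsto_cong[OF e1] l1 by blast
        moreover have "r x = 1 / f x" using False by (simp add: r_def)
        ultimately show ?thesis by simp
      qed
      with x show False by auto
    qed
  qed
  moreover have "finite (F \<union> {x. \<not> (f \<longlongrightarrow> f x) (at x)})" using F f unfolding CcF_def by auto
  ultimately have "finite {x. \<not> (r \<longlongrightarrow> r x) (at x)}" by (rule finite_subset)
  with cr have "r \<in> CcF" unfolding CcF_def by simp
  thus ?thesis unfolding r_def .
qed

theorem theorem7p6:
  shows "(CcF_von_neumann_regular TYPE('a::t1_space) \<longleftrightarrow>
            (\<forall>Z \<in> (ZCcF :: 'a set set). \<exists>F. finite F \<and>
               openin (subtopology euclidean (UNIV - F)) (Z - F) \<and>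
               closedin (subtopology euclidean (UNIV - F)) (Z - F)))
       \<and> (CcF_von_neumann_regular TYPE('a) \<longleftrightarrow> CcF_PP_ring TYPE('a))"
proof -
  have vnr_of: "CcF_von_neumann_regular TYPE('a)"
    if H: "\<And>f. f \<in> (CcF :: ('a \<Rightarrow> real) set) \<Longrightarrow> \<exists>F. finite F \<and>
        (\<forall>x. f x = 0 \<longrightarrow> x \<notin> F \<longrightarrow> eventually (\<lambda>y. f y = 0) (nhds x))"
  proof -
    show ?thesis unfolding CcF_von_neumann_regular_def
    proof
      fix f :: "'a \<Rightarrow> real" assume f: "f \<in> CcF"
      obtain F where "finite F" "\<forall>x. f x = 0 \<longrightarrow> x \<notin> F \<longrightarrow> eventually (\<lambda>y. f y = 0) (nhds x)"
        using H[OF f] by blast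
      from inv_CcF[OF f this] show "\<exists>r\<in>CcF. f = (\<lambda>x. f x * f x * r x)"
        by (intro bexI[of _ "\<lambda>x. if f x = 0 then 0 else 1 / f x"]) auto
    qed
  qed
  have A: "\<forall>Z \<in> (ZCcF :: 'a set set). \<exists>F. finite F \<and>
               openin (subtopology euclidean (UNIV - F)) (Z - F) \<and>
               closedin (subtopology euclidean (UNIV - F)) (Z - F)"
    if V: "CcF_von_neumann_regular TYPE('a)"
  proof
    fix Z :: "'a set" assume "Z \<in> ZCcF"
    then obtain f where f: "f \<in> CcF" and Z: "Z = zset f" unfolding ZCcF_def by auto
    obtain r where r: "r \<in> CcF" and fr: "f = (\<lambda>x. f x * f x * r x)"
      using V f unfolding CcF_von_neumann_regular_def by blast
    define e where "e = (\<lambda>x. f x * r x)"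
    have eC: "e \<in> CcF" unfolding e_def using CcF_mult[OF f r] .
    have ev: "e x = (if f x = 0 then 0 else 1)" for x
    proof -
      have "f x = f x * f x * r x" using fun_cong[OF fr, of x] by simp
      thus ?thesis unfolding e_def
        by (cases "f x = 0") (auto simp: field_simps)
    qed
    have e01: "\<forall>y. e y = 0 \<or> e y = 1" using ev by simp
    define F where "F = {x. \<not> (e \<longlongrightarrow> e x) (at x)}"
    have fF: "finite F" using eC unfolding CcF_def F_def by auto
    have oF: "open (UNIV - F)" using finite_imp_closed[OF fF] by (simp add: open_Diff)
    have evF: "eventually (\<lambda>y. y \<in> UNIV - F) (nhds x)" if "x \<in> UNIV - F" for x
      using eventually_nhds oF that by blast
    have o1: "open (Z - F)"
    proof (rule open_from_ev, intro ballI)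
      fix x assume x: "x \<in> Z - F"
      hence "eventually (\<lambda>y. e y = e x) (nhds x)"
        using cont01[OF _ e01, of x] x unfolding F_def by simp
      moreover have "e x = 0" using x Z ev unfolding zset_def by auto
      ultimately have "eventually (\<lambda>y. e y = 0) (nhds x)" by simp
      hence "eventually (\<lambda>y. f y = 0) (nhds x)"
        by (rule eventually_mono) (simp add: ev split: if_splits)
      with evF[of x] x show "eventually (\<lambda>y. y \<in> Z - F) (nhds x)"
        by (auto simp: Z zset_def elim: eventually_elim2)
    qed
    have o2: "open ((UNIV - F) - (Z - F))"
    proof (rule open_from_ev, intro ballI)
      fix x assume x: "x \<in> (UNIV - F) - (Z - F)"
      hence "eventually (\<lambda>y. e y = e x) (nhds x)"
        using cont01[OF _ e01, of x] x unfolding F_def by simp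
      moreover have "e x = 1" using x Z ev unfolding zset_def by auto
      ultimately have "eventually (\<lambda>y. e y = 1) (nhds x)" by simp
      hence "eventually (\<lambda>y. f y \<noteq> 0) (nhds x)"
        by (rule eventually_mono) (simp add: ev split: if_splits)
      with evF[of x] x show "eventually (\<lambda>y. y \<in> (UNIV - F) - (Z - F)) (nhds x)"
        by (auto simp: Z zset_def elim: eventually_elim2)
    qed
    have "openin (subtopology euclidean (UNIV - F)) (Z - F)"
      using openin_open_eq[OF oF] o1 by auto
    moreover have "closedin (subtopology euclidean (UNIV - F)) (Z - F)"
      unfolding closedin_def using openin_open_eq[OF oF] o2 by auto
    ultimately show "\<exists>F. finite F \<and> openin (subtopology euclidean (UNIV - F)) (Z - F) \<and>
               closedin (subtopology euclidean (UNIV - F)) (Z - F)" using fF by blast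
  qed
  have B: "CcF_von_neumann_regular TYPE('a)"
    if H: "\<forall>Z \<in> (ZCcF :: 'a set set). \<exists>F. finite F \<and>
               openin (subtopology euclidean (UNIV - F)) (Z - F) \<and>
               closedin (subtopology euclidean (UNIV - F)) (Z - F)"
  proof (rule vnr_of)
    fix f :: "'a \<Rightarrow> real" assume f: "f \<in> CcF"
    hence "zset f \<in> ZCcF" unfolding ZCcF_def by auto
    then obtain F where fF: "finite F" and o: "openin (subtopology euclidean (UNIV - F)) (zset f - F)"
      using H by blast
    have oF: "open (UNIV - F)" using finite_imp_closed[OF fF] by (simp add: open_Diff)
    have oz: "open (zset f - F)" using openin_open_eq[OF oF] o by auto
    have "\<forall>x. f x = 0 \<longrightarrow> x \<notin> F \<longrightarrow> eventually (\<lambda>y. f y = 0) (nhds x)"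
    proof (intro allI impI)
      fix x assume "f x = 0" "x \<notin> F"
      hence "x \<in> zset f - F" by (simp add: zset_def)
      hence "eventually (\<lambda>y. y \<in> zset f - F) (nhds x)"
        using eventually_nhds oz by blast
      thus "eventually (\<lambda>y. f y = 0) (nhds x)"
        by (rule eventually_mono) (simp add: zset_def)
    qed
    with fF show "\<exists>F. finite F \<and> (\<forall>x. f x = 0 \<longrightarrow> x \<notin> F \<longrightarrow> eventually (\<lambda>y. f y = 0) (nhds x))"
      by blast
  qed
  have C: "CcF_PP_ring TYPE('a)" if V: "CcF_von_neumann_regular TYPE('a)"
    unfolding CcF_PP_ring_def
  proof
    fix f :: "'a \<Rightarrow> real" assume f: "f \<in> CcF"
    obtain r where r: "r \<in> CcF" and fr: "f = (\<lambda>x. f x * f x * r x)"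
      using V f unfolding CcF_von_neumann_regular_def by blast
    define e where "e = (\<lambda>x. 1 - f x * r x)"
    have eC: "e \<in> CcF" unfolding e_def using CcF_one_minus[OF CcF_mult[OF f r]] .
    have fx: "f x = f x * f x * r x" for x using fun_cong[OF fr, of x] by simp
    have ev: "e x = (if f x = 0 then 1 else 0)" for x
      using fx[of x] unfolding e_def by (cases "f x = 0") (auto simp: field_simps)
    have idem: "(\<lambda>x. e x * e x) = e" by (rule ext) (simp add: ev)
    have "AnnCcF f = {(\<lambda>x. e x * h x) | h. h \<in> CcF}"
    proof
      show "AnnCcF f \<subseteq> {(\<lambda>x. e x * h x) | h. h \<in> CcF}"
      proof
        fix g assume "g \<in> AnnCcF f"
        hence g: "g \<in> CcF" "\<And>x. g x * f x = 0" unfolding AnnCcF_def by (auto dest: fun_cong)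
        have "g = (\<lambda>x. e x * g x)"
        proof
          fix x show "g x = e x * g x" using g(2)[of x] by (auto simp: ev)
        qed
        with g show "g \<in> {(\<lambda>x. e x * h x) | h. h \<in> CcF}" by blast
      qed
      show "{(\<lambda>x. e x * h x) | h. h \<in> CcF} \<subseteq> AnnCcF f"
        using CcF_mult[OF eC] by (auto simp: AnnCcF_def ev)
    qed
    with eC idem show "\<exists>e\<in>CcF. (\<lambda>x. e x * e x) = e \<and> AnnCcF f = {(\<lambda>x. e x * h x) | h. h \<in> CcF}"
      by blast
  qed
  have D: "CcF_von_neumann_regular TYPE('a)" if P: "CcF_PP_ring TYPE('a)"
  proof (rule vnr_of)
    fix f :: "'a \<Rightarrow> real" assume f: "f \<in> CcF"
    obtain e where eC: "e \<in> CcF" and idem: "(\<lambda>x. e x * e x) = e"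
      and ann: "AnnCcF f = {(\<lambda>x. e x * h x) | h. h \<in> CcF}"
      using P f unfolding CcF_PP_ring_def by blast
    have ide: "e x * e x = e x" for x using fun_cong[OF idem, of x] by simp
    have e01: "\<forall>y. e y = 0 \<or> e y = 1"
    proof
      fix y have "e y * (e y - 1) = 0" using ide[of y] by (simp add: algebra_simps)
      thus "e y = 0 \<or> e y = 1" by auto
    qed
    have "(\<lambda>x. e x * (\<lambda>_. 1) x) \<in> {(\<lambda>x. e x * h x) | h. h \<in> CcF}"
      using CcF_const[of 1] by (intro CollectI exI[of _ "\<lambda>_. 1"]) simp
    hence "(\<lambda>x. e x * (\<lambda>_. 1) x) \<in> AnnCcF f" using ann by simp
    hence "(\<lambda>x. e x * 1 * f x) = (\<lambda>x. 0)" unfolding AnnCcF_def by blast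
    hence ef: "e x * f x = 0" for x by (drule_tac x=x in fun_cong) simp
    have ez: "e x = 1" if "f x = 0" for x
    proof -
      have "(\<lambda>y. (if y = x then 1 else 0 :: real) * f y) = (\<lambda>y. 0)"
      proof
        fix y show "(if y = x then 1 else 0 :: real) * f y = 0" using that by simp
      qed
      hence "(\<lambda>y. if y = x then 1 else 0 :: real) \<in> AnnCcF f"
        using CcF_delta[of x] unfolding AnnCcF_def by blast
      then obtain h where hh: "(\<lambda>y. if y = x then 1 else 0 :: real) = (\<lambda>y. e y * h y)"
        using ann by blast
      have "e x * h x = 1" using fun_cong[OF hh, of x] by simp
      hence "e x \<noteq> 0" by auto
      thus ?thesis using e01 by auto
    qed
    define F where "F = {x. \<not> (e \<longlongrightarrow> e x) (at x)}"
    have fF: "finite F" using eC unfolding CcF_def F_def by auto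
    have "\<forall>x. f x = 0 \<longrightarrow> x \<notin> F \<longrightarrow> eventually (\<lambda>y. f y = 0) (nhds x)"
    proof (intro allI impI)
      fix x assume x: "f x = 0" "x \<notin> F"
      hence "eventually (\<lambda>y. e y = e x) (nhds x)"
        using cont01[OF _ e01, of x] x unfolding F_def by simp
      thus "eventually (\<lambda>y. f y = 0) (nhds x)"
      proof (rule eventually_mono)
        fix y assume "e y = e x"
        thus "f y = 0" using ef[of y] ez[OF x(1)] by simp
      qed
    qed
    with fF show "\<exists>F. finite F \<and> (\<forall>x. f x = 0 \<longrightarrow> x \<notin> F \<longrightarrow> eventually (\<lambda>y. f y = 0) (nhds x))"
      by blast
  qed
  show ?thesis using A B C D by blast
qed

end
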